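(* Let $\mathbb{F}$ be a finite field and $f\colon\mathbb{F}^n\times[m]\to\mathbb{F}$ be such that the map $x\mapsto (f(x,1),\dots,f(x,m))$ is $k$-wise independent. Suppose there is a non-adaptive static data structure for $f$ with space $s\ge 2$ and query time $t=2$, and suppose $k>8\log(s)$. Then \[ s \;\ge\; m - \frac{16\, m\log(s)}{k}. \]
   Context: A function $F\colon\mathbb{F}^n\to\mathbb{F}^m$ is $k$-wise independent if for every set of $k$ output coordinates, when $x$ is uniform on $\mathbb{F}^n$, the restriction of $F(x)$ to these coordinates is uniformly distributed on $\mathbb{F}^k$. A non-adaptive static data structure with space $s$ and query time $t$ for $f\colon\mathbb{F}^n\times[m]\to\mathbb{F}$ consists of an arbitrary preprocessing map $x\mapsto P(x)\in\mathbb{F}^s$ and, for each query $i\in[m]$, a fixed set of at most $t$ cell positions (independent of $x$) together with an arbitrary function of those cells' contents that equals $f(x,i)$ for all $x$. Logarithms are base 2. *)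

theory Defs
  imports Complex_Main
begin

text \<open>Inputs in F^n are lists of length n over the field; queries are indexed by [m] = {1..m}.\<close>

definition inputs :: "nat \<Rightarrow> 'a list set" where
  "inputs n = {x. length x = n}"

definition kwise_independent ::
  "nat \<Rightarrow> nat \<Rightarrow> ('a::finite list \<Rightarrow> nat \<Rightarrow> 'a) \<Rightarrow> nat \<Rightarrow> bool" where
  "kwise_independent n m f k \<longleftrightarrow>
     (\<forall>S. S \<subseteq> {1..m} \<longrightarrow> card S = k \<longrightarrow>
        (\<forall>y :: nat \<Rightarrow> 'a.
           card {x \<in> inputs n. \<forall>i\<in>S. f x i = y i} * card (UNIV :: 'a set) ^ k = card (inputs n :: 'a list set)))"

text \<open>Non-adaptive static data structure: preprocessing P x, a cell array indexed by {0..<s};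
  for each query i, a fixed probe set Q i of at most t cells (independent of x) and a
  function g i of the probed cells' contents computing f x i.\<close>

definition nonadaptive_ds ::
  "nat \<Rightarrow> nat \<Rightarrow> ('a::zero list \<Rightarrow> nat \<Rightarrow> 'a) \<Rightarrow> nat \<Rightarrow> nat \<Rightarrow> bool" where
  "nonadaptive_ds n m f s t \<longleftrightarrow>
     (\<exists>(P :: 'a list \<Rightarrow> nat \<Rightarrow> 'a) (Q :: nat \<Rightarrow> nat set) (g :: nat \<Rightarrow> (nat \<Rightarrow> 'a) \<Rightarrow> 'a).
        \<forall>i\<in>{1..m}. Q i \<subseteq> {..<s} \<and> card (Q i) \<le> t \<and>
          (\<forall>x\<in>inputs n. f x i = g i (\<lambda>j. if j \<in> Q i then P x j else 0)))"

end

theory Submission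
  imports Defs "HOL-Library.FuncSet"
begin


fun ball :: "nat set \<Rightarrow> (nat \<Rightarrow> nat set) \<Rightarrow> nat \<Rightarrow> nat \<Rightarrow> nat set" where
  "ball I E x 0 = {x}"
| "ball I E x (Suc j) = ball I E x j \<union> \<Union>(E ` {i\<in>I. E i \<inter> ball I E x j \<noteq> {}})"

lemma ball_sub: assumes "\<forall>i\<in>I. E i \<subseteq> V" "x \<in> V" shows "ball I E x j \<subseteq> V"
  using assms by (induction j) auto

lemma ball_mono: "ball I E x j \<subseteq> ball I E x (Suc j)" by auto

lemma ball_x: "x \<in> ball I E x j" by (induction j) auto

lemma tree_exists:
  assumes fin: "finite V" "finite I" and wf: "\<forall>i\<in>I. E i \<subseteq> V \<and> card (E i) \<le> 2" and xV: "x \<in> V"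
  shows "\<exists>T\<subseteq>I. (\<forall>i\<in>T. E i \<subseteq> ball I E x j)
     \<and> (\<forall>S\<subseteq>T. card S + 1 \<le> card (\<Union>(E`S) \<union> {x}))
     \<and> (\<forall>y\<in>ball I E x j. \<exists>P\<subseteq>T. card P \<le> j \<and> y \<in> \<Union>(E`P) \<union> {x} \<and> card (\<Union>(E`P) \<union> {x}) \<le> card P + 1)"
proof (induction j)
  case 0
  have a: "\<forall>S\<subseteq>{}. card S + 1 \<le> card (\<Union>(E`S) \<union> {x})" by simp
  have b: "\<forall>y\<in>ball I E x 0. \<exists>P\<subseteq>{}. card P \<le> 0 \<and> y \<in> \<Union>(E`P) \<union> {x} \<and> card (\<Union>(E`P) \<union> {x}) \<le> card P + 1"
  proof
    fix y assume "y \<in> ball I E x 0" hence "y = x" by simp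
    thus "\<exists>P\<subseteq>{}. card P \<le> 0 \<and> y \<in> \<Union>(E`P) \<union> {x} \<and> card (\<Union>(E`P) \<union> {x}) \<le> card P + 1"
      by (intro exI[of _ "{}"]) simp
  qed
  have c1: "{} \<subseteq> I" by simp
  have c2: "\<forall>i\<in>{}. E i \<subseteq> ball I E x 0" by simp
  show ?case by (rule exI[of _ "{}"]) (intro conjI c1 c2 a b)
next
  case (Suc j)
  obtain T where TT: "T \<subseteq> I \<and> (\<forall>i\<in>T. E i \<subseteq> ball I E x j)
     \<and> (\<forall>S\<subseteq>T. card S + 1 \<le> card (\<Union>(E`S) \<union> {x}))
     \<and> (\<forall>y\<in>ball I E x j. \<exists>P\<subseteq>T. card P \<le> j \<and> y \<in> \<Union>(E`P) \<union> {x} \<and> card (\<Union>(E`P) \<union> {x}) \<le> card P + 1)"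
    using Suc.IH ..
  have TI: "T \<subseteq> I" using TT by (rule conjunct1)
  have Tb: "\<forall>i\<in>T. E i \<subseteq> ball I E x j" using TT by (rule conjunct1[OF conjunct2])
  have Tf: "\<forall>S\<subseteq>T. card S + 1 \<le> card (\<Union>(E`S) \<union> {x})" using TT by (rule conjunct1[OF conjunct2[OF conjunct2]])
  have Tp: "\<forall>y\<in>ball I E x j. \<exists>P\<subseteq>T. card P \<le> j \<and> y \<in> \<Union>(E`P) \<union> {x} \<and> card (\<Union>(E`P) \<union> {x}) \<le> card P + 1"
    using TT by (rule conjunct2[OF conjunct2[OF conjunct2]])
  define B where "B = ball I E x j"
  define N where "N = ball I E x (Suc j) - B"
  have finV: "finite (ball I E x k)" for k
  proof (rule finite_subset[OF _ fin(1)])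
    show "ball I E x k \<subseteq> V" using ball_sub[of I E V x k] wf xV by blast
  qed
  have "\<forall>y\<in>N. \<exists>i. i \<in> I \<and> E i \<inter> B \<noteq> {} \<and> y \<in> E i"
    unfolding N_def B_def by auto
  then obtain pe where pe: "\<And>y. y \<in> N \<Longrightarrow> pe y \<in> I \<and> E (pe y) \<inter> B \<noteq> {} \<and> y \<in> E (pe y)"
    by metis
  have peq: "\<exists>b\<in>B. E (pe y) = {y, b}" if "y \<in> N" for y
  proof -
    from pe[OF that] obtain b where b: "b \<in> E (pe y)" "b \<in> B" by blast
    have yb: "y \<noteq> b" using that b unfolding N_def B_def by auto
    have c2: "card (E (pe y)) \<le> 2" using wf pe[OF that] by blast
    have "E (pe y) \<subseteq> V" using wf pe[OF that] by blast
    hence fin: "finite (E (pe y))" using fin(1) by (rule finite_subset)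
    have sub: "{y,b} \<subseteq> E (pe y)" using b pe[OF that] by blast
    have "card {y,b} = 2" using yb by simp
    hence "{y,b} = E (pe y)" using card_subset_eq[OF fin sub] c2 card_mono[OF fin sub] by simp
    thus ?thesis using b by blast
  qed
  have NB: "N \<inter> B = {}" unfolding N_def by auto
  have injpe: "inj_on pe N"
  proof
    fix y y' assume y: "y \<in> N" and y': "y' \<in> N" and eq: "pe y = pe y'"
    obtain b where b: "b \<in> B" "E (pe y) = {y,b}" using peq[OF y] by blast
    obtain b' where b': "b' \<in> B" "E (pe y') = {y',b'}" using peq[OF y'] by blast
    have "{y,b} = {y',b'}" using b b' eq by simp
    thus "y = y'" using NB y y' b b' by (auto simp: doubleton_eq_iff)
  qed
  have peT: "pe y \<notin> T" if "y \<in> N" for y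
    using Tb pe[OF that] NB that unfolding B_def by blast
  define T' where "T' = T \<union> pe ` N"
  have T'I: "T' \<subseteq> I" unfolding T'_def using TI pe by blast
  have T'b: "\<forall>i\<in>T'. E i \<subseteq> ball I E x (Suc j)"
  proof
    fix i assume "i \<in> T'"
    then consider "i \<in> T" | y where "y \<in> N" "i = pe y" unfolding T'_def by blast
    thus "E i \<subseteq> ball I E x (Suc j)"
    proof cases
      case 1 thus ?thesis using Tb by auto
    next
      case 2 thus ?thesis using pe[OF 2(1)] unfolding B_def by auto
    qed
  qed
  have T'f: "\<forall>S\<subseteq>T'. card S + 1 \<le> card (\<Union>(E`S) \<union> {x})"
  proof (intro allI impI)
    fix S assume S: "S \<subseteq> T'"
    define S0 where "S0 = S \<inter> T"
    define Y where "Y = {y\<in>N. pe y \<in> S}"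
    have finN: "finite N" unfolding N_def using finV by blast
    have finY: "finite Y" unfolding Y_def using finN by auto
    have Sdec: "S = S0 \<union> pe ` Y" using S unfolding S0_def Y_def T'_def by auto
    have disj: "S0 \<inter> pe ` Y = {}" unfolding S0_def Y_def using peT by auto
    have "S0 \<subseteq> I" unfolding S0_def using TI by blast
    hence finS0: "finite S0" using fin(2) by (rule finite_subset)
    have "Y \<subseteq> N" unfolding Y_def by blast
    hence "inj_on pe Y" by (rule inj_on_subset[OF injpe])
    hence cY: "card (pe ` Y) = card Y" by (rule card_image)
    have "card S = card (S0 \<union> pe ` Y)" using Sdec by simp
    also have "\<dots> = card S0 + card (pe ` Y)" by (rule card_Un_disjoint[OF finS0 finite_imageI[OF finY] disj])
    finally have cS: "card S = card S0 + card Y" using cY by simp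
    have sub1: "\<Union>(E`S0) \<subseteq> \<Union>(E`S)" unfolding S0_def by blast
    have sub2: "Y \<subseteq> \<Union>(E`S)"
    proof
      fix y assume "y \<in> Y" hence y: "y \<in> N" "pe y \<in> S" unfolding Y_def by auto
      thus "y \<in> \<Union>(E`S)" using pe[OF y(1)] by blast
    qed
    have sub: "(\<Union>(E`S0) \<union> {x}) \<union> Y \<subseteq> \<Union>(E`S) \<union> {x}"
      using sub1 sub2 by blast
    have U0B: "\<Union>(E`S0) \<union> {x} \<subseteq> B" using Tb ball_x unfolding S0_def B_def by blast
    have disj2: "(\<Union>(E`S0) \<union> {x}) \<inter> Y = {}" using U0B NB unfolding Y_def by blast
    have finU: "finite (\<Union>(E`S) \<union> {x})"
    proof -
      have "\<Union>(E`S) \<subseteq> V" using S T'I wf by blast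
      hence "\<Union>(E`S) \<union> {x} \<subseteq> V" using xV by blast
      thus ?thesis using fin(1) by (rule finite_subset)
    qed
    have fin0: "finite (\<Union>(E`S0) \<union> {x})" using U0B finV[of j] unfolding B_def by (rule finite_subset)
    have "card ((\<Union>(E`S0) \<union> {x}) \<union> Y) = card (\<Union>(E`S0) \<union> {x}) + card Y"
      using card_Un_disjoint[OF fin0 finY disj2] .
    moreover have "card S0 + 1 \<le> card (\<Union>(E`S0) \<union> {x})" using Tf S0_def by auto
    moreover have "card ((\<Union>(E`S0) \<union> {x}) \<union> Y) \<le> card (\<Union>(E`S) \<union> {x})"
      using card_mono[OF finU sub] .
    ultimately show "card S + 1 \<le> card (\<Union>(E`S) \<union> {x})" using cS by linarith
  qed
  have T'p: "\<forall>y\<in>ball I E x (Suc j). \<exists>P\<subseteq>T'. card P \<le> Suc j \<and> y \<in> \<Union>(E`P) \<union> {x} \<and> card (\<Union>(E`P) \<union> {x}) \<le> card P + 1"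
  proof
    fix y assume y: "y \<in> ball I E x (Suc j)"
    show "\<exists>P\<subseteq>T'. card P \<le> Suc j \<and> y \<in> \<Union>(E`P) \<union> {x} \<and> card (\<Union>(E`P) \<union> {x}) \<le> card P + 1"
    proof (cases "y \<in> B")
      case True
      have "\<exists>P\<subseteq>T. card P \<le> j \<and> y \<in> \<Union>(E`P) \<union> {x} \<and> card (\<Union>(E`P) \<union> {x}) \<le> card P + 1"
        using bspec[OF Tp True[unfolded B_def]] .
      then obtain P where P: "P \<subseteq> T \<and> card P \<le> j \<and> y \<in> \<Union>(E`P) \<union> {x} \<and> card (\<Union>(E`P) \<union> {x}) \<le> card P + 1" ..
      have "P \<subseteq> T'" using P unfolding T'_def by blast
      moreover have "card P \<le> Suc j" using P by linarith
      ultimately show ?thesis using P by blast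
    next
      case False
      hence yN: "y \<in> N" using y N_def by blast
      obtain b where b: "b \<in> B" "E (pe y) = {y,b}" using peq[OF yN] by blast
      have "\<exists>P\<subseteq>T. card P \<le> j \<and> b \<in> \<Union>(E`P) \<union> {x} \<and> card (\<Union>(E`P) \<union> {x}) \<le> card P + 1"
        using bspec[OF Tp b(1)[unfolded B_def]] .
      then obtain P where P: "P \<subseteq> T \<and> card P \<le> j \<and> b \<in> \<Union>(E`P) \<union> {x} \<and> card (\<Union>(E`P) \<union> {x}) \<le> card P + 1" ..
      have PT: "P \<subseteq> T" using P by blast
      have "P \<subseteq> I" using PT TI by blast
      hence finP: "finite P" using fin(2) by (rule finite_subset)
      have pn: "pe y \<notin> P" using peT[OF yN] PT by blast
      have cP: "card (insert (pe y) P) = card P + 1" using finP pn by simp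
      have bP: "b \<in> \<Union>(E`P) \<union> {x}" using P by blast
      have eqU: "\<Union>(E`insert (pe y) P) \<union> {x} = insert y (\<Union>(E`P) \<union> {x})" using b(2) bP by auto
      have finUP: "finite (\<Union>(E`P) \<union> {x})"
      proof -
        have "\<Union>(E`P) \<subseteq> V" using PT TI wf by blast
        hence "\<Union>(E`P) \<union> {x} \<subseteq> V" using xV by blast
        thus ?thesis using fin(1) by (rule finite_subset)
      qed
      have "card (insert y (\<Union>(E`P) \<union> {x})) \<le> card (\<Union>(E`P) \<union> {x}) + 1"
        using finUP by (simp add: card_insert_if)
      moreover have "card (\<Union>(E`P) \<union> {x}) \<le> card P + 1" using P by blast
      ultimately have c1: "card (\<Union>(E`insert (pe y) P) \<union> {x}) \<le> card (insert (pe y) P) + 1"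
        using eqU cP by simp
      have c2: "card (insert (pe y) P) \<le> Suc j" using cP P by simp
      have c3: "y \<in> \<Union>(E`insert (pe y) P) \<union> {x}" using eqU by blast
      have c4: "insert (pe y) P \<subseteq> T'" using PT yN unfolding T'_def by blast
      show ?thesis using c1 c2 c3 c4 by blast
    qed
  qed
  show ?case using T'I T'b T'f T'p by blast
qed



lemma union_paths:
  assumes finI: "finite I" and TI: "T \<subseteq> I" and wf: "\<forall>i\<in>I. E i \<subseteq> V \<and> card (E i) \<le> 2"
    and finV: "finite V" and xV: "x \<in> V" and finX: "finite X"
    and forest: "\<forall>S\<subseteq>T. card S + 1 \<le> card (\<Union>(E`S) \<union> {x})"
    and paths: "\<forall>a\<in>X. P a \<subseteq> T \<and> card (\<Union>(E`P a) \<union> {x}) \<le> card (P a) + 1"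
  shows "card (\<Union>(E`(\<Union>a\<in>X. P a)) \<union> {x}) \<le> card (\<Union>a\<in>X. P a) + 1"
  using finX paths
proof (induction X rule: finite_induct)
  case empty
  then show ?case by simp
next
  case (insert a X)
  define Z where "Z = (\<Union>a\<in>X. P a)"
  define Q where "Q = P a"
  have IH: "card (\<Union>(E`Z) \<union> {x}) \<le> card Z + 1" using insert unfolding Z_def by blast
  have Qp: "Q \<subseteq> T" "card (\<Union>(E`Q) \<union> {x}) \<le> card Q + 1" using insert.prems unfolding Q_def by auto
  have ZT: "Z \<subseteq> T" using insert.prems unfolding Z_def by blast
  have finsub: "finite S" if "S \<subseteq> T" for S using that TI finI by (meson finite_subset)
  have finU: "finite (\<Union>(E`S) \<union> {x})" if "S \<subseteq> T" for S
  proof -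
    have "\<Union>(E`S) \<union> {x} \<subseteq> V" using that TI wf xV by blast
    thus ?thesis using finV by (rule finite_subset)
  qed
  have e1: "\<Union>(E`(Q \<union> Z)) \<union> {x} = (\<Union>(E`Q) \<union> {x}) \<union> (\<Union>(E`Z) \<union> {x})" by blast
  have e2: "\<Union>(E`(Q \<inter> Z)) \<union> {x} \<subseteq> (\<Union>(E`Q) \<union> {x}) \<inter> (\<Union>(E`Z) \<union> {x})" by blast
  have QZT: "Q \<inter> Z \<subseteq> T" using Qp by blast
  have f1: "card (Q \<inter> Z) + 1 \<le> card (\<Union>(E`(Q \<inter> Z)) \<union> {x})" using forest QZT by blast
  have f2: "card (\<Union>(E`(Q \<inter> Z)) \<union> {x}) \<le> card ((\<Union>(E`Q) \<union> {x}) \<inter> (\<Union>(E`Z) \<union> {x}))"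
    by (rule card_mono[OF _ e2]) (use finU[OF Qp(1)] in blast)
  have f3: "card ((\<Union>(E`Q) \<union> {x}) \<union> (\<Union>(E`Z) \<union> {x})) + card ((\<Union>(E`Q) \<union> {x}) \<inter> (\<Union>(E`Z) \<union> {x}))
      = card (\<Union>(E`Q) \<union> {x}) + card (\<Union>(E`Z) \<union> {x})"
    using card_Un_Int[OF finU[OF Qp(1)] finU[OF ZT]] by linarith
  have f4: "card (Q \<union> Z) + card (Q \<inter> Z) = card Q + card Z"
    using card_Un_Int[OF finsub[OF Qp(1)] finsub[OF ZT]] by linarith
  have "card (\<Union>(E`(Q \<union> Z)) \<union> {x}) \<le> card (Q \<union> Z) + 1"
    unfolding e1 using f1 f2 f3 f4 IH Qp(2) by linarith
  moreover have "(\<Union>a\<in>insert a X. P a) = Q \<union> Z" unfolding Q_def Z_def by blast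
  ultimately show ?case by simp
qed

lemma card_filter_sum: assumes "finite I" shows "card {i\<in>I. P i} = (\<Sum>i\<in>I. if P i then 1 else (0::nat))"
proof -
  have "card {i\<in>I. P i} = (\<Sum>i\<in>{i\<in>I. P i}. 1)" by (rule card_eq_sum)
  also have "\<dots> = (\<Sum>i\<in>I. if P i then 1 else 0)" by (rule sum.inter_filter[OF assms])
  finally show ?thesis .
qed

lemma double_count:
  assumes "finite I" "finite B"
  shows "(\<Sum>y\<in>B. card {i\<in>I. y \<in> E i}) = (\<Sum>i\<in>I. card {y\<in>B. y \<in> E i})"
proof -
  have "(\<Sum>y\<in>B. card {i\<in>I. y \<in> E i}) = (\<Sum>y\<in>B. \<Sum>i\<in>I. if y \<in> E i then 1 else (0::nat))"
    using assms(1) by (simp add: card_filter_sum)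
  also have "\<dots> = (\<Sum>i\<in>I. \<Sum>y\<in>B. if y \<in> E i then 1 else (0::nat))" by (rule sum.swap)
  also have "\<dots> = (\<Sum>i\<in>I. card {y\<in>B. y \<in> E i})"
    using assms(2) by (simp add: card_filter_sum)
  finally show ?thesis .
qed

lemma growth:
  assumes fin: "finite V" "finite I" and wf: "\<forall>i\<in>I. E i \<subseteq> V \<and> card (E i) \<le> 2" and xV: "x \<in> V"
    and deg: "\<forall>u\<in>V. 3 \<le> card {i\<in>I. u \<in> E i}"
    and H: "\<forall>A\<subseteq>I. card A \<le> 4 * Suc j + 2 \<longrightarrow> card A \<le> card (\<Union>(E`A))"
  shows "3 * card (ball I E x j) \<le> 2 * card (ball I E x (Suc j))"
proof -
  define B where "B = ball I E x (Suc j)"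
  define Bm where "Bm = ball I E x j"
  have BV: "B \<subseteq> V" unfolding B_def using ball_sub[of I E V x] wf xV by blast
  have BmV: "Bm \<subseteq> V" unfolding Bm_def using ball_sub[of I E V x] wf xV by blast
  have finB: "finite B" using BV fin(1) by (rule finite_subset)
  have finBm: "finite Bm" using BmV fin(1) by (rule finite_subset)
  have xB: "x \<in> B" unfolding B_def by (rule ball_x)
  have "\<exists>T\<subseteq>I. (\<forall>i\<in>T. E i \<subseteq> ball I E x (Suc j))
     \<and> (\<forall>S\<subseteq>T. card S + 1 \<le> card (\<Union>(E`S) \<union> {x}))
     \<and> (\<forall>y\<in>ball I E x (Suc j). \<exists>P\<subseteq>T. card P \<le> Suc j \<and> y \<in> \<Union>(E`P) \<union> {x} \<and> card (\<Union>(E`P) \<union> {x}) \<le> card P + 1)"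
    by (rule tree_exists[OF fin wf xV])
  then obtain T where TT: "T \<subseteq> I \<and> (\<forall>i\<in>T. E i \<subseteq> ball I E x (Suc j))
     \<and> (\<forall>S\<subseteq>T. card S + 1 \<le> card (\<Union>(E`S) \<union> {x}))
     \<and> (\<forall>y\<in>ball I E x (Suc j). \<exists>P\<subseteq>T. card P \<le> Suc j \<and> y \<in> \<Union>(E`P) \<union> {x} \<and> card (\<Union>(E`P) \<union> {x}) \<le> card P + 1)" ..
  have TI: "T \<subseteq> I" using TT by (rule conjunct1)
  have Tb: "\<forall>i\<in>T. E i \<subseteq> B" using TT unfolding B_def by (rule conjunct1[OF conjunct2])
  have Tf: "\<forall>S\<subseteq>T. card S + 1 \<le> card (\<Union>(E`S) \<union> {x})" using TT by (rule conjunct1[OF conjunct2[OF conjunct2]])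
  have Tp: "\<forall>y\<in>B. \<exists>P\<subseteq>T. card P \<le> Suc j \<and> y \<in> \<Union>(E`P) \<union> {x} \<and> card (\<Union>(E`P) \<union> {x}) \<le> card P + 1"
    using TT unfolding B_def by (rule conjunct2[OF conjunct2[OF conjunct2]])
  define ins where "ins = {i\<in>I. E i \<subseteq> B}"
  have finins: "finite ins" unfolding ins_def using fin(2) by simp
  have Tins: "T \<subseteq> ins" unfolding ins_def using TI Tb by blast
  have finT: "finite T" using TI fin(2) by (rule finite_subset)
  have c1: "card (ins - T) \<le> 1"
  proof (rule ccontr)
    assume "\<not> card (ins - T) \<le> 1"
    hence "\<not> (\<forall>a1\<in>ins - T. \<forall>a2\<in>ins - T. a1 = a2)" using card_le_Suc0_iff_eq[of "ins - T"] finins by simp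
    then obtain e e' where ee: "e \<in> ins - T" "e' \<in> ins - T" "e \<noteq> e'" by blast
    define X where "X = E e \<union> E e'"
    have XB: "X \<subseteq> B" using ee unfolding X_def ins_def by blast
    have finE: "finite (E i)" if "i \<in> I" for i
    proof -
      have "E i \<subseteq> V" using wf that by blast
      thus ?thesis using fin(1) by (rule finite_subset)
    qed
    have eI: "e \<in> I" "e' \<in> I" using ee unfolding ins_def by auto
    have finX: "finite X" unfolding X_def using finE eI by blast
    have cX: "card X \<le> 4"
    proof -
      have "card X \<le> card (E e) + card (E e')" unfolding X_def by (rule card_Un_le)
      moreover have "card (E e) \<le> 2" "card (E e') \<le> 2" using wf eI by auto
      ultimately show ?thesis by linarith
    qed
    have "\<forall>a\<in>X. \<exists>P. P \<subseteq> T \<and> card P \<le> Suc j \<and> a \<in> \<Union>(E`P) \<union> {x} \<and> card (\<Union>(E`P) \<union> {x}) \<le> card P + 1"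
      using Tp XB by blast
    from bchoice[OF this] obtain Pa where Pa: "\<forall>a\<in>X. Pa a \<subseteq> T \<and> card (Pa a) \<le> Suc j \<and> a \<in> \<Union>(E`Pa a) \<union> {x} \<and> card (\<Union>(E`Pa a) \<union> {x}) \<le> card (Pa a) + 1"
      by blast
    define Z where "Z = (\<Union>a\<in>X. Pa a)"
    have ZT: "Z \<subseteq> T" unfolding Z_def using Pa by blast
    have finZ: "finite Z" using ZT finT by (rule finite_subset)
    have cZ: "card (\<Union>(E`Z) \<union> {x}) \<le> card Z + 1"
      unfolding Z_def by (rule union_paths[OF fin(2) TI wf fin(1) xV finX Tf]) (use Pa in blast)
    have cZ2: "card Z \<le> 4 * Suc j"
    proof -
      have "card Z \<le> (\<Sum>a\<in>X. card (Pa a))" unfolding Z_def by (rule card_UN_le[OF finX])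
      also have "\<dots> \<le> card X * Suc j" using sum_bounded_above[of X "\<lambda>a. card (Pa a)" "Suc j"] Pa by simp
      also have "\<dots> \<le> 4 * Suc j" by (rule mult_le_mono1[OF cX])
      finally show ?thesis .
    qed
    define A where "A = insert e (insert e' Z)"
    have eZ: "e \<notin> Z" "e' \<notin> Z" using ee ZT by auto
    have cA: "card A = card Z + 2" unfolding A_def using eZ ee(3) finZ by simp
    have AI: "A \<subseteq> I" unfolding A_def using eI ZT TI by blast
    have "card A \<le> 4 * Suc j + 2" using cA cZ2 by linarith
    hence "card A \<le> card (\<Union>(E`A))" by (rule H[rule_format, OF AI])
    moreover have "\<Union>(E`A) \<subseteq> \<Union>(E`Z) \<union> {x}"
    proof -
      have "X \<subseteq> \<Union>(E`Z) \<union> {x}"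
      proof
        fix a assume a: "a \<in> X"
        have "a \<in> \<Union>(E`Pa a) \<union> {x}" using Pa a by blast
        moreover have "Pa a \<subseteq> Z" unfolding Z_def using a by blast
        ultimately show "a \<in> \<Union>(E`Z) \<union> {x}" by blast
      qed
      thus ?thesis unfolding A_def X_def by blast
    qed
    moreover have "finite (\<Union>(E`Z) \<union> {x})"
    proof -
      have "\<Union>(E`Z) \<union> {x} \<subseteq> V" using ZT TI wf xV by blast
      thus ?thesis using fin(1) by (rule finite_subset)
    qed
    ultimately have "card A \<le> card (\<Union>(E`Z) \<union> {x})" using card_mono[of "\<Union>(E`Z) \<union> {x}" "\<Union>(E`A)"] by linarith
    thus False using cZ cA by linarith
  qed
  have c2: "card ins \<le> card B"
  proof -
    have "card T + 1 \<le> card (\<Union>(E`T) \<union> {x})" using Tf[rule_format, OF subset_refl] .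
    also have "\<dots> \<le> card B" using Tb xB finB by (intro card_mono) auto
    finally have a: "card T + 1 \<le> card B" .
    have "ins = T \<union> (ins - T)" using Tins by blast
    hence "card ins \<le> card T + card (ins - T)" by (metis card_Un_le)
    thus ?thesis using a c1 by linarith
  qed
  have c3: "3 * card Bm \<le> (\<Sum>y\<in>Bm. card {i\<in>I. y \<in> E i})"
    using sum_bounded_below[of Bm 3 "\<lambda>y. card {i\<in>I. y \<in> E i}"] deg BmV by (simp add: mult.commute subset_iff)
  also have "\<dots> = (\<Sum>i\<in>I. card {y\<in>Bm. y \<in> E i})" by (rule double_count[OF fin(2) finBm])
  also have "\<dots> \<le> (\<Sum>i\<in>I. if E i \<inter> Bm \<noteq> {} then 2 else 0)"
  proof (rule sum_mono)
    fix i assume i: "i \<in> I"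
    have fE: "finite (E i)" using wf i fin(1) finite_subset by blast
    show "card {y\<in>Bm. y \<in> E i} \<le> (if E i \<inter> Bm \<noteq> {} then 2 else 0)"
    proof (cases "E i \<inter> Bm = {}")
      case True
      hence "{y\<in>Bm. y \<in> E i} = {}" by blast
      hence "card {y\<in>Bm. y \<in> E i} = 0" by (metis card.empty)
      thus ?thesis using True by simp
    next
      case False
      have "card {y\<in>Bm. y \<in> E i} \<le> card (E i)" using fE by (intro card_mono) auto
      thus ?thesis using False wf i by auto
    qed
  qed
  also have "\<dots> = 2 * card {i\<in>I. E i \<inter> Bm \<noteq> {}}"
  proof -
    have eq: "I \<inter> {i. E i \<inter> Bm \<noteq> {}} = {i\<in>I. E i \<inter> Bm \<noteq> {}}" by blast
    show ?thesis using fin(2) by (simp add: sum.If_cases eq)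
  qed
  also have "\<dots> \<le> 2 * card ins"
  proof -
    have "{i\<in>I. E i \<inter> Bm \<noteq> {}} \<subseteq> ins" unfolding ins_def B_def Bm_def by auto
    thus ?thesis using card_mono[OF finins] by (meson mult_le_mono2)
  qed
  finally have "3 * card Bm \<le> 2 * card ins" .
  hence "3 * card Bm \<le> 2 * card B" using c2 by linarith
  thus ?thesis unfolding Bm_def B_def .
qed



lemma moore_final:
  fixes V I :: "nat set" and E :: "nat \<Rightarrow> nat set" and x :: nat
  assumes fin: "finite V" "finite I" and wf: "\<forall>i\<in>I. E i \<subseteq> V \<and> card (E i) \<le> 2" and xV: "x \<in> V"
    and deg: "\<forall>u\<in>V. 3 \<le> card {i\<in>I. u \<in> E i}"
    and lt: "2^\<rho> * card V < 3^\<rho>"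
  shows "\<exists>A\<subseteq>I. card A \<le> 4*\<rho>+2 \<and> card (\<Union>(E`A)) < card A"
proof (rule ccontr)
  assume "\<not> ?thesis"
  hence H: "\<forall>A\<subseteq>I. card A \<le> 4*\<rho>+2 \<longrightarrow> card A \<le> card (\<Union>(E`A))" by (auto simp: not_less)
  have "j \<le> \<rho> \<longrightarrow> 3^j \<le> 2^j * card (ball I E x j)" for j
  proof (induction j)
    case 0
    show ?case by simp
  next
    case (Suc j)
    show ?case
    proof
      assume j: "Suc j \<le> \<rho>"
      have IH: "3^j \<le> 2^j * card (ball I E x j)" using Suc j by simp
      have H': "\<forall>A\<subseteq>I. card A \<le> 4 * Suc j + 2 \<longrightarrow> card A \<le> card (\<Union>(E`A))"
        using H j by auto
      have g: "3 * card (ball I E x j) \<le> 2 * card (ball I E x (Suc j))"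
        by (rule growth[OF fin wf xV deg H'])
      have "3^Suc j = 3 * 3^j" by simp
      also have "\<dots> \<le> 3 * (2^j * card (ball I E x j))" using IH by simp
      also have "\<dots> = 2^j * (3 * card (ball I E x j))" by simp
      also have "\<dots> \<le> 2^j * (2 * card (ball I E x (Suc j)))" using g by simp
      also have "\<dots> = 2^Suc j * card (ball I E x (Suc j))" by simp
      finally show "3^Suc j \<le> 2^Suc j * card (ball I E x (Suc j))" .
    qed
  qed
  hence a: "3^\<rho> \<le> 2^\<rho> * card (ball I E x \<rho>)" by blast
  have "card (ball I E x \<rho>) \<le> card V"
    using ball_sub[of I E V x \<rho>] wf xV fin(1) by (meson card_mono)
  hence "2^\<rho> * card (ball I E x \<rho>) \<le> 2^\<rho> * card V" by simp
  thus False using a lt by linarith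
qed

definition Lf :: "nat \<Rightarrow> real" where "Lf v = log 2 (max 2 (real v))"

lemma Lf_ge1: "1 \<le> Lf v"
  unfolding Lf_def by simp

lemma Lf_mono: "a \<le> b \<Longrightarrow> Lf a \<le> Lf b"
  unfolding Lf_def by simp

lemma bound_mono:
  assumes "W' \<le> W" "Lf a \<le> Lf b" "0 < K"
  shows "16 * real W' * Lf a / real K \<le> 16 * real W * Lf b / real K"
proof -
  have "real W' * Lf a \<le> real W * Lf b"
    using assms(1,2) Lf_ge1[of a] by (intro mult_mono) auto
  thus ?thesis using assms(3) by (simp add: divide_right_mono)
qed

lemma rho_choice:
  assumes "v \<ge> 1"
  shows "\<exists>\<rho>::nat. 2^\<rho> * v < 3^\<rho> \<and> real (4*\<rho>+2) \<le> 16 * Lf v"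
proof -
  define L where "L = Lf v"
  have L1: "1 \<le> L" unfolding L_def by (rule Lf_ge1)
  define \<rho> where "\<rho> = nat \<lceil>2 * L\<rceil>"
  have r1: "2 * L \<le> real \<rho>" unfolding \<rho>_def by linarith
  have r2: "real \<rho> < 2 * L + 1" unfolding \<rho>_def using L1 by linarith
  have "real v \<le> max 2 (real v)" by simp
  also have "\<dots> = 2 powr L" unfolding L_def Lf_def by simp
  also have "\<dots> < (9/4) powr L" using L1 by (intro powr_less_mono2) auto
  also have "(9/4::real) powr L = ((3/2) powr 2) powr L" proof -
    have "(3/2::real) powr 2 = (3/2)^2" by (rule powr_numeral) simp
    also have "\<dots> = 9/4" by (simp add: power2_eq_square)
    finally have e: "(3/2::real) powr 2 = 9/4" .
    show ?thesis by (simp only: e)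
  qed
  also have "\<dots> = (3/2) powr (2 * L)" by (simp only: powr_powr)
  also have "\<dots> \<le> (3/2) powr (real \<rho>)" using r1 by (intro powr_mono) auto
  also have "\<dots> = (3/2)^\<rho>" by (simp add: powr_realpow)
  also have "\<dots> = 3^\<rho> / 2^\<rho>" by (simp add: power_divide)
  finally have "real v < 3^\<rho> / 2^\<rho>" .
  hence "2^\<rho> * real v < 3^\<rho>" by (simp add: field_simps)
  hence "real (2^\<rho> * v) < real (3^\<rho>)" by simp
  hence c1: "2^\<rho> * v < 3^\<rho>" by linarith
  have c2: "real (4*\<rho>+2) \<le> 16 * Lf v" using r2 L1 unfolding L_def by simp
  show ?thesis using c1 c2 by blast
qed

lemma find_bad:
  fixes V I :: "nat set" and E :: "nat \<Rightarrow> nat set"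
  assumes fin: "finite V" "finite I" and wf: "\<forall>i\<in>I. E i \<subseteq> V \<and> card (E i) \<le> 2"
    and deg: "\<forall>u\<in>V. 3 \<le> card {i\<in>I. u \<in> E i}" and ne: "I \<noteq> {}"
  shows "\<exists>A\<subseteq>I. real (card A) \<le> 16 * Lf (card V) \<and> card (\<Union>(E`A)) < card A"
proof (cases "V = {}")
  case True
  obtain i where i: "i \<in> I" using ne by blast
  have "E i = {}" using wf i True by blast
  hence "card (\<Union>(E`{i})) < card {i}" by simp
  moreover have "real (card {i}) \<le> 16 * Lf (card V)" using Lf_ge1[of "card V"] by simp
  ultimately show ?thesis using i by blast
next
  case False
  then obtain x where xV: "x \<in> V" by blast
  have "card V \<ge> 1" using xV fin(1) by (metis One_nat_def Suc_leI card_gt_0_iff empty_iff)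
  then obtain \<rho> where r: "2^\<rho> * card V < 3^\<rho>" "real (4*\<rho>+2) \<le> 16 * Lf (card V)"
    using rho_choice by blast
  obtain A where A: "A \<subseteq> I" "card A \<le> 4*\<rho>+2" "card (\<Union>(E`A)) < card A"
    using moore_final[OF fin wf xV deg r(1)] by blast
  have "real (card A) \<le> real (4*\<rho>+2)" using A(2) by linarith
  thus ?thesis using A r(2) by (meson order_trans)
qed

lemma graph_main:
  fixes V I :: "nat set" and E :: "nat \<Rightarrow> nat set" and w :: "nat \<Rightarrow> nat" and K :: nat
  assumes "finite V" "finite I" "\<forall>i\<in>I. E i \<subseteq> V \<and> card (E i) \<le> 2"
    "\<forall>A\<subseteq>I. sum w A \<le> K \<longrightarrow> card A \<le> card (\<Union>(E`A))" "0 < K"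
  shows "real (card I) - real (card V) \<le> 16 * real (sum w I) * Lf (card V) / real K"
  using assms
proof (induction "card V + card I" arbitrary: V I E w rule: less_induct)
  case less
  note fin = less.prems(1,2) and wf = less.prems(3) and H = less.prems(4) and K0 = less.prems(5)
  have rhs0: "0 \<le> 16 * real (sum w I) * Lf (card V) / real K"
    using Lf_ge1[of "card V"] by (intro divide_nonneg_nonneg mult_nonneg_nonneg) (auto simp del: of_nat_sum)
  show ?case
  proof (cases "I = {}")
    case True
    thus ?thesis using rhs0 by simp
  next
    case Ine: False
    show ?thesis
    proof (cases "\<exists>u\<in>V. card {i\<in>I. u \<in> E i} \<le> 2")
      case False
      hence deg: "\<forall>u\<in>V. 3 \<le> card {i\<in>I. u \<in> E i}" by auto
      obtain A where A: "A \<subseteq> I" "real (card A) \<le> 16 * Lf (card V)" "card (\<Union>(E`A)) < card A"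
        using find_bad[OF fin wf deg Ine] by blast
      have finA: "finite A" using A(1) fin(2) by (rule finite_subset)
      have Ane: "A \<noteq> {}" using A(3) by auto
      have big: "K < sum w A" using H A(1) A(3) by (meson not_le)
      obtain i where i: "i \<in> A" "\<forall>j\<in>A. w j \<le> w i"
      proof -
        have "Max (w ` A) \<in> w ` A" using finA Ane by simp
        then obtain i where "i \<in> A" "w i = Max (w ` A)" by auto
        moreover have "\<forall>j\<in>A. w j \<le> Max (w ` A)" using finA by simp
        ultimately show ?thesis using that by auto
      qed
      have "sum w A \<le> card A * w i" using sum_bounded_above[of A w "w i"] i(2) by simp
      hence "real K < real (card A) * real (w i)" using big
        by (metis of_nat_less_iff of_nat_mult order_less_le_trans)
      also have "\<dots> \<le> 16 * Lf (card V) * real (w i)" using A(2) by (simp add: mult_right_mono)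
      finally have kk: "real K < 16 * Lf (card V) * real (w i)" .
      have iI: "i \<in> I" using i A(1) by blast
      define I' where "I' = I - {i}"
      have cI: "card I = Suc (card I')" unfolding I'_def by (rule card_Suc_Diff1[symmetric, OF fin(2) iI])
      have sI: "sum w I = w i + sum w I'" unfolding I'_def by (rule sum.remove[OF fin(2) iI])
      have IH: "real (card I') - real (card V) \<le> 16 * real (sum w I') * Lf (card V) / real K"
      proof (rule less.hyps)
        show "card V + card I' < card V + card I" using cI by simp
        show "finite V" by (rule fin(1))
        show "finite I'" unfolding I'_def using fin(2) by simp
        show "\<forall>i\<in>I'. E i \<subseteq> V \<and> card (E i) \<le> 2" unfolding I'_def using wf by blast
        show "\<forall>A\<subseteq>I'. sum w A \<le> K \<longrightarrow> card A \<le> card (\<Union>(E`A))" unfolding I'_def using H by blast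
        show "0 < K" by (rule K0)
      qed
      have e1: "16 * real (sum w I) * Lf (card V) / real K
          = 16 * real (sum w I') * Lf (card V) / real K + 16 * real (w i) * Lf (card V) / real K"
        unfolding sI by (simp add: add_divide_distrib[symmetric] algebra_simps)
      have e2: "1 < 16 * real (w i) * Lf (card V) / real K" using kk K0 by (simp add: field_simps)
      show ?thesis using IH e1 e2 cI by simp
    next
      case True
      then obtain u where uV: "u \<in> V" and du: "card {i\<in>I. u \<in> E i} \<le> 2" by blast
      define D where "D = {i\<in>I. u \<in> E i}"
      have finD: "finite D" unfolding D_def using fin(2) by simp
      have cV: "card V = Suc (card (V - {u}))" by (rule card_Suc_Diff1[symmetric, OF fin(1) uV])
      have LV: "Lf (card (V - {u})) \<le> Lf (card V)" using cV by (intro Lf_mono) simp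
      have finV': "finite (V - {u})" using fin(1) by simp
      have "card D = 0 \<or> card D = 1 \<or> card D = 2" using du unfolding D_def by linarith
      then consider (d0) "D = {}" | (d1) j where "D = {j}" | (d2) j1 j2 where "D = {j1, j2}" "j1 \<noteq> j2"
        using finD by (metis card_0_eq card_1_singletonE card_2_iff)
      thus ?thesis
      proof cases
        case d0
        have IH: "real (card I) - real (card (V - {u})) \<le> 16 * real (sum w I) * Lf (card (V - {u})) / real K"
        proof (rule less.hyps)
          show "card (V - {u}) + card I < card V + card I" using cV by simp
          show "finite (V - {u})" by (rule finV')
          show "finite I" by (rule fin(2))
          show "\<forall>i\<in>I. E i \<subseteq> V - {u} \<and> card (E i) \<le> 2" using wf d0 unfolding D_def by blast
          show "\<forall>A\<subseteq>I. sum w A \<le> K \<longrightarrow> card A \<le> card (\<Union>(E`A))" by (rule H)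
          show "0 < K" by (rule K0)
        qed
        have "16 * real (sum w I) * Lf (card (V - {u})) / real K \<le> 16 * real (sum w I) * Lf (card V) / real K"
          by (rule bound_mono[OF order_refl LV K0])
        thus ?thesis using IH cV by simp
      next
        case (d1 j)
        have jI: "j \<in> I" "u \<in> E j" using d1 unfolding D_def by auto
        have oth: "\<forall>i\<in>I - {j}. u \<notin> E i" using d1 unfolding D_def by blast
        have cI: "card I = Suc (card (I - {j}))" by (rule card_Suc_Diff1[symmetric, OF fin(2) jI(1)])
        have IH: "real (card (I - {j})) - real (card (V - {u})) \<le> 16 * real (sum w (I - {j})) * Lf (card (V - {u})) / real K"
        proof (rule less.hyps)
          show "card (V - {u}) + card (I - {j}) < card V + card I" using cV cI by simp
          show "finite (V - {u})" by (rule finV')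
          show "finite (I - {j})" using fin(2) by simp
          show "\<forall>i\<in>I - {j}. E i \<subseteq> V - {u} \<and> card (E i) \<le> 2" using wf oth by blast
          show "\<forall>A\<subseteq>I - {j}. sum w A \<le> K \<longrightarrow> card A \<le> card (\<Union>(E`A))" using H by blast
          show "0 < K" by (rule K0)
        qed
        have "sum w (I - {j}) \<le> sum w I" using fin(2) by (intro sum_mono2) auto
        hence "16 * real (sum w (I - {j})) * Lf (card (V - {u})) / real K \<le> 16 * real (sum w I) * Lf (card V) / real K"
          by (rule bound_mono[OF _ LV K0])
        thus ?thesis using IH cV cI by simp
      next
        case (d2 j1 j2)
        have jI: "j1 \<in> I" "j2 \<in> I" "u \<in> E j1" "u \<in> E j2" using d2 unfolding D_def by auto
        have oth: "\<forall>i\<in>I. i \<noteq> j1 \<longrightarrow> i \<noteq> j2 \<longrightarrow> u \<notin> E i" using d2 unfolding D_def by blast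
        define I' where "I' = I - {j2}"
        define E' where "E' = E(j1 := (E j1 \<union> E j2) - {u})"
        define w' where "w' = w(j1 := w j1 + w j2)"
        have j1I': "j1 \<in> I'" unfolding I'_def using jI d2(2) by blast
        have cI: "card I = Suc (card I')" unfolding I'_def by (rule card_Suc_Diff1[symmetric, OF fin(2) jI(2)])
        have finI': "finite I'" unfolding I'_def using fin(2) by simp
        have sw: "sum w' I' = sum w I"
        proof -
          have "sum w' I' = w' j1 + sum w' (I' - {j1})" by (rule sum.remove[OF finI' j1I'])
          also have "sum w' (I' - {j1}) = sum w (I' - {j1})" unfolding w'_def by (intro sum.cong) auto
          also have "w' j1 = w j1 + w j2" unfolding w'_def by simp
          finally have a: "sum w' I' = w j1 + w j2 + sum w (I' - {j1})" .
          have "sum w I = w j2 + sum w I'" unfolding I'_def by (rule sum.remove[OF fin(2) jI(2)])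
          also have "sum w I' = w j1 + sum w (I' - {j1})" by (rule sum.remove[OF finI' j1I'])
          finally show ?thesis using a by simp
        qed
        have finE: "finite (E i)" if "i \<in> I" for i
        proof -
          have "E i \<subseteq> V" using wf that by blast
          thus ?thesis using fin(1) by (rule finite_subset)
        qed
        have cE': "card (E' j1) \<le> 2"
        proof -
          have "card (E j1 - {u}) = card (E j1) - 1" using jI finE by simp
          moreover have "card (E j2 - {u}) = card (E j2) - 1" using jI finE by simp
          moreover have "card (E' j1) \<le> card (E j1 - {u}) + card (E j2 - {u})"
          proof -
            have "E' j1 = (E j1 - {u}) \<union> (E j2 - {u})" unfolding E'_def by auto
            thus ?thesis by (metis card_Un_le)
          qed
          moreover have "card (E j1) \<le> 2" "card (E j2) \<le> 2" using wf jI by auto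
          ultimately show ?thesis by linarith
        qed
        have wf': "\<forall>i\<in>I'. E' i \<subseteq> V - {u} \<and> card (E' i) \<le> 2"
        proof
          fix i assume i: "i \<in> I'"
          show "E' i \<subseteq> V - {u} \<and> card (E' i) \<le> 2"
          proof (cases "i = j1")
            case True
            have "E' j1 \<subseteq> V - {u}" unfolding E'_def using wf jI by auto
            thus ?thesis using True cE' by simp
          next
            case False
            have "i \<noteq> j2" "i \<in> I" using i unfolding I'_def by auto
            hence "u \<notin> E i" using oth False by blast
            moreover have "E' i = E i" unfolding E'_def using False by simp
            ultimately show ?thesis using wf \<open>i \<in> I\<close> by auto
          qed
        qed
        have H': "\<forall>A\<subseteq>I'. sum w' A \<le> K \<longrightarrow> card A \<le> card (\<Union>(E'`A))"
        proof (intro allI impI)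
          fix A assume AI: "A \<subseteq> I'" and sA: "sum w' A \<le> K"
          have finA: "finite A" using AI finI' by (rule finite_subset)
          show "card A \<le> card (\<Union>(E'`A))"
          proof (cases "j1 \<in> A")
            case False
            have "sum w' A = sum w A" unfolding w'_def using False by (intro sum.cong) auto
            moreover have "E' ` A = E ` A" unfolding E'_def using False by (intro image_cong) auto
            moreover have "A \<subseteq> I" using AI unfolding I'_def by blast
            ultimately show ?thesis using H sA by auto
          next
            case True
            define A' where "A' = insert j2 A"
            have j2A: "j2 \<notin> A" using AI unfolding I'_def by blast
            have A'I: "A' \<subseteq> I" unfolding A'_def using AI jI unfolding I'_def by blast
            have cA': "card A' = Suc (card A)" unfolding A'_def using j2A finA by simp
            have "sum w A' = w j2 + sum w A" unfolding A'_def using j2A finA by simp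
            also have "sum w A = w j1 + sum w (A - {j1})" by (rule sum.remove[OF finA True])
            also have "sum w (A - {j1}) = sum w' (A - {j1})" unfolding w'_def by (intro sum.cong) auto
            finally have "sum w A' = w' j1 + sum w' (A - {j1})" unfolding w'_def by simp
            also have "\<dots> = sum w' A" by (rule sum.remove[OF finA True, symmetric])
            finally have "sum w A' \<le> K" using sA by simp
            hence c: "card A' \<le> card (\<Union>(E`A'))" using H A'I by blast
            have rest: "\<forall>i\<in>A - {j1}. E' i = E i \<and> u \<notin> E i"
            proof
              fix i assume i: "i \<in> A - {j1}"
              have "i \<in> I" "i \<noteq> j2" using i AI unfolding I'_def by auto
              thus "E' i = E i \<and> u \<notin> E i" unfolding E'_def using i oth by auto
            qed
            have U1: "\<Union>(E`A') = insert u (\<Union>(E'`A))"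
            proof -
              have a: "A' = insert j1 (insert j2 (A - {j1}))" unfolding A'_def using True by blast
              have b: "A = insert j1 (A - {j1})" using True by blast
              have "\<Union>(E`A') = E j1 \<union> E j2 \<union> \<Union>(E`(A - {j1}))" unfolding a by auto
              moreover have "\<Union>(E'`A) = ((E j1 \<union> E j2) - {u}) \<union> \<Union>(E`(A - {j1}))"
              proof -
                have "\<Union>(E'`A) = E' j1 \<union> \<Union>(E'`(A - {j1}))" by (subst b) auto
                moreover have "\<Union>(E'`(A - {j1})) = \<Union>(E`(A - {j1}))" using rest by auto
                ultimately show ?thesis unfolding E'_def by simp
              qed
              ultimately show ?thesis using jI by auto
            qed
            have un: "u \<notin> \<Union>(E'`A)"
            proof
              assume "u \<in> \<Union>(E'`A)"
              then obtain i where i: "i \<in> A" "u \<in> E' i" by blast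
              show False
              proof (cases "i = j1")
                case True thus False using i unfolding E'_def by simp
              next
                case False thus False using i rest by auto
              qed
            qed
            have finU: "finite (\<Union>(E'`A))"
            proof -
              have "\<Union>(E'`A) \<subseteq> V - {u}" using wf' AI by blast
              thus ?thesis using finV' by (rule finite_subset)
            qed
            have "card (\<Union>(E`A')) = Suc (card (\<Union>(E'`A)))" unfolding U1 using un finU by simp
            thus ?thesis using c cA' by simp
          qed
        qed
        have IH: "real (card I') - real (card (V - {u})) \<le> 16 * real (sum w' I') * Lf (card (V - {u})) / real K"
        proof (rule less.hyps)
          show "card (V - {u}) + card I' < card V + card I" using cV cI by simp
          show "finite (V - {u})" by (rule finV')
          show "finite I'" by (rule finI')
          show "\<forall>i\<in>I'. E' i \<subseteq> V - {u} \<and> card (E' i) \<le> 2" by (rule wf')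
          show "\<forall>A\<subseteq>I'. sum w' A \<le> K \<longrightarrow> card A \<le> card (\<Union>(E'`A))" by (rule H')
          show "0 < K" by (rule K0)
        qed
        have "16 * real (sum w' I') * Lf (card (V - {u})) / real K \<le> 16 * real (sum w I) * Lf (card V) / real K"
          using sw by (intro bound_mono[OF _ LV K0]) simp
        thus ?thesis using IH cV cI by simp
      qed
    qed
  qed
qed



lemma card_field_ge2: "2 \<le> card (UNIV :: 'a::{finite,field} set)"
proof -
  have "card {0::'a, 1} = 2" by simp
  moreover have "card {0::'a, 1} \<le> card (UNIV :: 'a set)" by (rule card_mono) auto
  ultimately show ?thesis by simp
qed

lemma inputs_finite: "finite (inputs n :: 'a::finite list set)"
proof -
  have "inputs n = {xs :: 'a list. set xs \<subseteq> UNIV \<and> length xs = n}" unfolding inputs_def by simp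
  thus ?thesis using finite_lists_length_eq[of "UNIV :: 'a set" n] by simp
qed

lemma inputs_ne: "replicate n undefined \<in> inputs n"
  unfolding inputs_def by simp

lemma indep_cells:
  fixes f :: "'a::{finite, field} list \<Rightarrow> nat \<Rightarrow> 'a" and Q :: "nat \<Rightarrow> nat set" and s t :: nat
    and A :: "nat set" and P :: "'a list \<Rightarrow> nat \<Rightarrow> 'a"
  assumes kw: "kwise_independent n m f k" and km: "k \<le> m"
    and ds: "\<forall>i\<in>{1..m}. Q i \<subseteq> {..<s} \<and> card (Q i) \<le> t \<and>
          (\<forall>x\<in>inputs n. f x i = g i (\<lambda>j. if j \<in> Q i then P x j else 0))"
    and AI: "A \<subseteq> {1..m}" and Ak: "card A \<le> k"
  shows "card A \<le> card (\<Union>(Q`A))"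
proof -
  have finA: "finite A" using AI finite_subset by blast
  have "k - card A \<le> card ({1..m} - A)" using AI km Ak by (simp add: card_Diff_subset finA)
  then obtain B where B: "B \<subseteq> {1..m} - A" "card B = k - card A" "finite B"
    by (rule obtain_subset_with_card_n)
  define S where "S = A \<union> B"
  have SI: "S \<subseteq> {1..m}" unfolding S_def using AI B by blast
  have AS: "A \<subseteq> S" unfolding S_def by blast
  have cS: "card S = k" unfolding S_def using B finA Ak by (subst card_Un_disjoint) auto
  have surj: "\<exists>x\<in>inputs n. \<forall>i\<in>S. f x i = y i" for y
  proof -
    have eq: "card {x \<in> inputs n. \<forall>i\<in>S. f x i = y i} * card (UNIV :: 'a set) ^ k = card (inputs n :: 'a list set)"
      using kw SI cS unfolding kwise_independent_def by blast
    have "card (inputs n :: 'a list set) \<noteq> 0" using inputs_finite inputs_ne by (metis card_0_eq empty_iff)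
    hence "card {x \<in> inputs n. \<forall>i\<in>S. f x i = y i} \<noteq> 0" using eq by (metis mult_zero_left)
    hence "{x \<in> inputs n. \<forall>i\<in>S. f x i = y i} \<noteq> {}" by (metis card.empty)
    thus ?thesis by blast
  qed
  define C where "C = \<Union>(Q`A)"
  have CI: "C \<subseteq> {..<s}" unfolding C_def using ds AI by blast
  have finC: "finite C" using CI by (rule finite_subset) (rule finite_lessThan)
  define h where "h = (\<lambda>\<phi>. restrict (\<lambda>i. g i (\<lambda>j. if j \<in> Q i then \<phi> j else 0)) A)"
  have fact: "restrict (f x) A = h (restrict (P x) C)" if x: "x \<in> inputs n" for x
  proof
    fix i show "restrict (f x) A i = h (restrict (P x) C) i"
    proof (cases "i \<in> A")
      case True
      have QC: "Q i \<subseteq> C" unfolding C_def using True by blast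
      have "f x i = g i (\<lambda>j. if j \<in> Q i then P x j else 0)" using ds True AI x by blast
      also have "(\<lambda>j. if j \<in> Q i then P x j else 0) = (\<lambda>j. if j \<in> Q i then restrict (P x) C j else 0)"
      proof (rule ext)
        fix j show "(if j \<in> Q i then P x j else 0) = (if j \<in> Q i then restrict (P x) C j else 0)"
          using QC by (cases "j \<in> Q i") auto
      qed
      finally show ?thesis unfolding h_def using True by simp
    next
      case False
      thus ?thesis unfolding h_def by simp
    qed
  qed
  have sub1: "(\<Pi>\<^sub>E i\<in>A. (UNIV :: 'a set)) \<subseteq> (\<lambda>x. restrict (f x) A) ` inputs n"
  proof
    fix \<psi> assume psi: "\<psi> \<in> (\<Pi>\<^sub>E i\<in>A. (UNIV :: 'a set))"
    obtain x where x: "x \<in> inputs n" "\<forall>i\<in>S. f x i = \<psi> i" using surj by blast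
    have "restrict (f x) A = \<psi>"
    proof
      fix i show "restrict (f x) A i = \<psi> i"
        using x(2) AS psi by (cases "i \<in> A") (auto simp: PiE_iff extensional_def)
    qed
    thus "\<psi> \<in> (\<lambda>x. restrict (f x) A) ` inputs n" using x(1) by blast
  qed
  have eqimg: "(\<lambda>x. restrict (f x) A) ` inputs n = h ` ((\<lambda>x. restrict (P x) C) ` inputs n)"
    unfolding image_image using fact by (intro image_cong) auto
  have sub2: "(\<lambda>x. restrict (P x) C) ` inputs n \<subseteq> (\<Pi>\<^sub>E i\<in>C. (UNIV :: 'a set))" by auto
  have finPC: "finite (\<Pi>\<^sub>E i\<in>C. (UNIV :: 'a set))" using finC by (intro finite_PiE) auto
  have "card (UNIV :: 'a set) ^ card A = card (\<Pi>\<^sub>E i\<in>A. (UNIV :: 'a set))"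
    using card_PiE[OF finA, of "\<lambda>_. UNIV :: 'a set"] by simp
  also have "\<dots> \<le> card ((\<lambda>x. restrict (f x) A) ` inputs n)"
    using sub1 inputs_finite by (intro card_mono) auto
  also have "\<dots> \<le> card ((\<lambda>x. restrict (P x) C) ` inputs n)"
    unfolding eqimg by (rule card_image_le) (rule finite_subset[OF sub2 finPC])
  also have "\<dots> \<le> card (\<Pi>\<^sub>E i\<in>C. (UNIV :: 'a set))" using sub2 finPC by (rule card_mono[rotated])
  also have "\<dots> = card (UNIV :: 'a set) ^ card C"
    using card_PiE[OF finC, of "\<lambda>_. UNIV :: 'a set"] by simp
  finally have "card (UNIV :: 'a set) ^ card A \<le> card (UNIV :: 'a set) ^ card C" .
  hence "card A \<le> card C" using card_field_ge2[where 'a='a] by (intro power_le_imp_le_exp) auto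
  thus ?thesis unfolding C_def .
qed

theorem mainTheorem2:
  fixes f :: "'a::{finite, field} list \<Rightarrow> nat \<Rightarrow> 'a"
    and n m k s :: nat
  assumes "kwise_independent n m f k"
    and "k \<le> m"
    and "nonadaptive_ds n m f s 2"
    and "s \<ge> 2"
    and "real k > 8 * log 2 (real s)"
  shows "real s \<ge> real m - 16 * real m * log 2 (real s) / real k"
proof -
  obtain P :: "'a list \<Rightarrow> nat \<Rightarrow> 'a" and Q :: "nat \<Rightarrow> nat set" and g :: "nat \<Rightarrow> (nat \<Rightarrow> 'a) \<Rightarrow> 'a" where
    ds: "\<forall>i\<in>{1..m}. Q i \<subseteq> {..<s} \<and> card (Q i) \<le> 2 \<and>
          (\<forall>x\<in>inputs n. f x i = g i (\<lambda>j. if j \<in> Q i then P x j else 0))"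
    using assms(3) unfolding nonadaptive_ds_def by blast
  have ls: "1 \<le> log 2 (real s)" using assms(4) by simp
  have K0: "0 < k" using assms(5) ls by simp
  have H: "\<forall>A\<subseteq>{1..m}. sum (\<lambda>_. 1::nat) A \<le> k \<longrightarrow> card A \<le> card (\<Union>(Q`A))"
    using indep_cells[OF assms(1,2) ds] by simp
  have wf: "\<forall>i\<in>{1..m}. Q i \<subseteq> {..<s} \<and> card (Q i) \<le> 2" using ds by blast
  have "real (card {1..m}) - real (card {..<s}) \<le> 16 * real (sum (\<lambda>_. 1::nat) {1..m}) * Lf (card {..<s}) / real k"
    by (rule graph_main[OF _ _ wf H K0]) auto
  moreover have "Lf s = log 2 (real s)" unfolding Lf_def using assms(4) by simp
  ultimately show ?thesis by simp
qed


end
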